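(* Let $K\ge 1$ and let $\lambda_i>0$, $c_i>0$ for $i=1,\dots,K$. Let $\eta_1,\dots,\eta_K$ be independent random variables with $\eta_i\sim\mathrm{GG}(\lambda_i,c_i,1)$. Then: (i) if $\Psi=\prod_{i=1}^K \eta_i$, the sparsity shape parameter of $\Psi$ equals $\min\{\lambda_1,\dots,\lambda_K\}$; (ii) if $\Psi=\sum_{i=1}^K \eta_i$, the sparsity shape parameter of $\Psi$ equals $\sum_{i=1}^K \lambda_i$.
   Context: The gamma-gamma distribution $\mathrm{GG}(\lambda,c,d)$ with $\lambda,c,d>0$ is the distribution on $(0,\infty)$ with density $$g(\Psi)=\left(\frac{1}{d}\right)^{\lambda}\frac{\Gamma(\lambda+c)}{\Gamma(\lambda)\Gamma(c)}\Psi^{\lambda-1}\left(1+\frac{\Psi}{d}\right)^{-(\lambda+c)}.$$ For a positive random variable $\Psi$ with density $p$ on $(0,\infty)$, its sparsity shape parameter is defined as $$\sup\left\{ z \;\middle|\; \frac{p(\Psi)}{\Psi^{z-1}}\to \kappa \text{ as } \Psi\to 0 \text{ for some finite } \kappa\right\}.$$ *)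

theory Defs
  imports "HOL-Probability.Probability"
begin

definition gg_density :: "real \<Rightarrow> real \<Rightarrow> real \<Rightarrow> real \<Rightarrow> real" where
  "gg_density lam c d x =
     (if 0 < x then (1 / d) powr lam * (Gamma (lam + c) / (Gamma lam * Gamma c))
        * x powr (lam - 1) * (1 + x / d) powr (- (lam + c))
      else 0)"

definition sparsity_shape :: "(real \<Rightarrow> real) \<Rightarrow> real" where
  "sparsity_shape p =
     Sup {z. \<exists>\<kappa>::real. ((\<lambda>x. p x / x powr (z - 1)) \<longlongrightarrow> \<kappa>) (at_right 0)}"

text \<open>p is a (nonnegative) density of X w.r.t. Lebesgue measure which is continuous on (0, infinity).
  Such a version is unique on (0, infinity), which makes the sparsity shape parameter well defined.\<close>
definition cont_density :: "'a measure \<Rightarrow> ('a \<Rightarrow> real) \<Rightarrow> (real \<Rightarrow> real) \<Rightarrow> bool" where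
  "cont_density M X p \<longleftrightarrow>
     distributed M lborel X (\<lambda>x. ennreal (p x)) \<and> (\<forall>x. 0 \<le> p x) \<and> continuous_on {0<..} p"

end

theory Submission
  imports Defs "HOL-Real_Asymp.Real_Asymp"
begin

lemma sparsity_from_bounds:
  fixes p :: "real \<Rightarrow> real" and m :: real
  assumes m: "m > 0" and nn: "\<And>x. x > 0 \<Longrightarrow> 0 \<le> p x"
    and up: "\<And>w. 0 < w \<Longrightarrow> w < m \<Longrightarrow> \<exists>C. \<forall>x\<in>{0<..1}. p x \<le> C * x powr (w - 1)"
    and low: "\<delta> > 0" "c > 0" "\<And>x. x \<in> {0<..\<delta>} \<Longrightarrow> c * x powr (m - 1) \<le> p x"
  shows "sparsity_shape p = m"
proof -
  define S where "S = {z. \<exists>\<kappa>::real. ((\<lambda>x. p x / x powr (z - 1)) \<longlongrightarrow> \<kappa>) (at_right 0)}"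
  have inS: "z \<in> S" if "z < m" for z
  proof -
    define w where "w = (max z 0 + m) / 2"
    have w: "0 < w" "w < m" "z < w" using that m by (auto simp: w_def)
    obtain C where C: "\<And>x. x\<in>{0<..1} \<Longrightarrow> p x \<le> C * x powr (w - 1)" using up[OF w(1,2)] by blast
    have "((\<lambda>x. p x / x powr (z - 1)) \<longlongrightarrow> 0) (at_right 0)"
    proof (rule tendsto_sandwich)
      have ev: "eventually (\<lambda>x::real. x \<in> {0<..1}) (at_right 0)"
        by (simp add: eventually_at_right_field) (intro exI[of _ 1], auto)
      show "eventually (\<lambda>x. 0 \<le> p x / x powr (z - 1)) (at_right 0)"
        using ev by eventually_elim (use nn in auto)
      show "eventually (\<lambda>x. p x / x powr (z - 1) \<le> C * x powr (w - z)) (at_right 0)"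
        using ev
      proof eventually_elim
        case (elim x)
        then have "p x / x powr (z - 1) \<le> C * x powr (w - 1) / x powr (z - 1)"
          using C[OF elim] by (intro divide_right_mono) auto
        also have "\<dots> = C * x powr (w - z)"
          using powr_diff[of x "w - 1" "z - 1"] by simp
        finally show ?case .
      qed
      have "((\<lambda>x. x powr (w - z)) \<longlongrightarrow> 0) (at_right 0)" using w by real_asymp
      then show "((\<lambda>x. C * x powr (w - z)) \<longlongrightarrow> 0) (at_right 0)"
        using tendsto_mult_right_zero by blast
    qed simp
    then show ?thesis unfolding S_def by blast
  qed
  have notS: "z \<notin> S" if "z > m" for z
  proof
    assume "z \<in> S"
    then obtain \<kappa> where k: "((\<lambda>x. p x / x powr (z - 1)) \<longlongrightarrow> \<kappa>) (at_right 0)"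
      unfolding S_def by blast
    have e1: "eventually (\<lambda>x. p x / x powr (z - 1) < \<kappa> + 1) (at_right 0)"
      using k by (rule order_tendstoD) simp
    have "filterlim (\<lambda>x. x powr (m - z)) at_top (at_right 0)" using that by real_asymp
    then have "filterlim (\<lambda>x. c * x powr (m - z)) at_top (at_right 0)"
      using low(2) by (intro filterlim_tendsto_pos_mult_at_top[OF tendsto_const]) auto
    then have e2: "eventually (\<lambda>x. c * x powr (m - z) > \<kappa> + 1) (at_right 0)"
      by (simp add: filterlim_at_top_dense)
    have e3: "eventually (\<lambda>x::real. x \<in> {0<..\<delta>}) (at_right 0)"
      using low(1) by (simp add: eventually_at_right_field) (intro exI[of _ \<delta>], auto)
    have "eventually (\<lambda>x. False) (at_right (0::real))"
      using e1 e2 e3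
    proof eventually_elim
      case (elim x)
      have "c * x powr (m - z) = c * x powr (m - 1) / x powr (z - 1)"
        using powr_diff[of x "m - 1" "z - 1"] by simp
      also have "\<dots> \<le> p x / x powr (z - 1)"
        using low(3)[OF elim(3)] elim by (intro divide_right_mono) auto
      finally show ?case using elim by linarith
    qed
    then show False by simp
  qed
  have "Sup S = m"
  proof (rule cSup_eq_non_empty)
    show "S \<noteq> {}" using inS[of 0] m by blast
    show "x \<le> m" if "x \<in> S" for x using notS[of x] that by force
    show "m \<le> y" if "\<And>x. x \<in> S \<Longrightarrow> x \<le> y" for y
    proof (rule ccontr)
      assume "\<not> m \<le> y"
      then have "(y + m) / 2 \<in> S" by (intro inS) auto
      from that[OF this] \<open>\<not> m \<le> y\<close> show False by auto
    qed
  qed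
  then show ?thesis unfolding sparsity_shape_def S_def .
qed

lemma cont_density_unique:
  fixes p q :: "real \<Rightarrow> real"
  assumes M: "prob_space M"
    and p: "distributed M lborel X (\<lambda>x. ennreal (p x))" "continuous_on {0<..} p"
    and q: "distributed M lborel X (\<lambda>x. ennreal (q x))" "continuous_on {0<..} q"
    and nn: "\<And>x. 0 \<le> p x" "\<And>x. 0 \<le> q x"
    and x0: "x0 > 0"
  shows "p x0 = q x0"
proof (rule ccontr)
  assume ne: "p x0 \<noteq> q x0"
  have AE: "AE x in lborel. p x = q x"
    using prob_space.distributed_unique[OF M p(1) q(1)] nn by (auto elim!: AE_mp)
  define d where "d = (\<lambda>x. p x - q x)"
  have "continuous_on {0<..} d" unfolding d_def using p(2) q(2) by (intro continuous_intros)
  then have "open (d -` (-{0}) \<inter> {0<..})"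
    using continuous_on_open_vimage[OF open_greaterThan, of 0 d] by auto
  moreover have "x0 \<in> d -` (-{0}) \<inter> {0<..}" using ne x0 by (auto simp: d_def)
  ultimately obtain e where e: "e > 0" "ball x0 e \<subseteq> d -` (-{0}) \<inter> {0<..}"
    by (meson open_contains_ball)
  have "AE x in lborel. x \<notin> {x0 - e<..<x0 + e}"
    using AE
  proof eventually_elim
    case (elim x)
    then show ?case using e(2) by (auto simp: ball_eq_greaterThanLessThan d_def)
  qed
  then have "{x0 - e<..<x0 + e} \<in> null_sets lborel"
    by (subst AE_iff_null_sets) auto
  then show False using e(1) by (simp add: null_sets_def)
qed

lemma isCont_param_integral:
  fixes F :: "real \<Rightarrow> real \<Rightarrow> real" and w :: "real \<Rightarrow> real"
  assumes U: "open U" "x0 \<in> U"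
    and meas: "\<And>x. F x \<in> borel_measurable lborel"
    and cont: "\<And>t. isCont (\<lambda>x. F x t) x0"
    and w: "integrable lborel w"
    and bound: "\<And>x t. x \<in> U \<Longrightarrow> \<bar>F x t\<bar> \<le> w t"
  shows "isCont (\<lambda>x. \<integral>t. F x t \<partial>lborel) x0"
proof (rule continuous_at_sequentiallyI)
  fix u :: "nat \<Rightarrow> real" assume u: "u \<longlonglongrightarrow> x0"
  have "eventually (\<lambda>n. u n \<in> U) sequentially"
    using topological_tendstoD[OF u U] .
  then obtain N where N: "\<And>n. n \<ge> N \<Longrightarrow> u n \<in> U" by (auto simp: eventually_sequentially)
  have "(\<lambda>n. \<integral>t. F (u (n + N)) t \<partial>lborel) \<longlonglongrightarrow> \<integral>t. F x0 t \<partial>lborel"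
  proof (rule integral_dominated_convergence[where w=w])
    show "AE t in lborel. (\<lambda>n. F (u (n + N)) t) \<longlonglongrightarrow> F x0 t"
    proof (intro AE_I2)
      fix t
      have "(\<lambda>n. u (n + N)) \<longlonglongrightarrow> x0" using u by (rule LIMSEQ_ignore_initial_segment)
      then show "(\<lambda>n. F (u (n + N)) t) \<longlonglongrightarrow> F x0 t"
        using cont[of t] by (rule isCont_tendsto_compose[rotated])
    qed
    show "AE t in lborel. norm (F (u (n + N)) t) \<le> w t" for n
      using bound[OF N[of "n + N"]] by auto
  qed (use meas w in auto)
  then show "(\<lambda>n. \<integral>t. F (u n) t \<partial>lborel) \<longlonglongrightarrow> \<integral>t. F x0 t \<partial>lborel"
    by (rule LIMSEQ_offset)
qed

lemma (in prob_space) prod_indep_random_variable: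
  fixes X Y :: "'a \<Rightarrow> real"
  assumes ind: "indep_var borel X borel Y"
  assumes [simp, measurable]: "random_variable borel X"
  assumes [simp, measurable]: "random_variable borel Y"
  shows "distr M borel (\<lambda>x. X x * Y x) = distr (distr M borel X \<Otimes>\<^sub>M distr M borel Y) borel (\<lambda>(x, y). x * y)"
  using ind unfolding indep_var_distribution_eq
  by (auto simp: distr_distr intro!:arg_cong[where f = "distr M borel"])

lemma product_density:
  fixes f g :: "real \<Rightarrow> ennreal"
  assumes [measurable]: "f \<in> borel_measurable borel" "g \<in> borel_measurable borel"
  assumes [simp]: "finite_measure (density lborel f)" "finite_measure (density lborel g)"
  assumes f0: "\<And>t. t \<le> 0 \<Longrightarrow> f t = 0"
  shows "distr (density lborel f \<Otimes>\<^sub>M density lborel g) borel (\<lambda>(x, y). x * y)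
     = density lborel (\<lambda>z. \<integral>\<^sup>+t. f t * g (z / t) * ennreal (1 / t) \<partial>lborel)"
    (is "?l = ?r")
proof (intro measure_eqI)
  fix A assume "A \<in> sets ?l"
  then have [measurable]: "A \<in> sets borel"
    by simp
  interpret Mf: finite_measure "density lborel f" by simp
  interpret Mg: finite_measure "density lborel g" by simp
  interpret pair_sigma_finite "density lborel f" "density lborel g" ..
  let ?P = "density lborel f \<Otimes>\<^sub>M density lborel g"
  have "emeasure ?l A = emeasure ?P ((\<lambda>p. fst p * snd p) -` A \<inter> space ?P)"
    by (subst emeasure_distr) (auto simp: split_beta')
  also have "\<dots> = (\<integral>\<^sup>+p. indicator ((\<lambda>p. fst p * snd p) -` A \<inter> space ?P) p \<partial>?P)"
    by (rule nn_integral_indicator[symmetric]) measurable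
  also have "\<dots> = (\<integral>\<^sup>+p. indicator A (fst p * snd p) \<partial>?P)"
    by (intro nn_integral_cong) (auto simp: space_pair_measure split: split_indicator)
  also have "\<dots> = (\<integral>\<^sup>+x. \<integral>\<^sup>+y. indicator A (x * y) \<partial>density lborel g \<partial>density lborel f)"
  proof -
    have meas: "(\<lambda>p. indicator A (fst p * snd p) :: ennreal) \<in> borel_measurable ?P" by measurable
    show ?thesis using Mg.nn_integral_fst[OF meas] by simp
  qed
  also have "\<dots> = (\<integral>\<^sup>+x. f x * (\<integral>\<^sup>+y. g y * indicator A (x * y) \<partial>lborel) \<partial>lborel)"
    by (simp add: nn_integral_density)
  also have "\<dots> = (\<integral>\<^sup>+x. (\<integral>\<^sup>+z. f x * g (z / x) * ennreal (1 / x) * indicator A z \<partial>lborel) \<partial>lborel)"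
  proof (intro nn_integral_cong)
    fix x :: real
    show "f x * (\<integral>\<^sup>+y. g y * indicator A (x * y) \<partial>lborel) =
      (\<integral>\<^sup>+z. f x * g (z / x) * ennreal (1 / x) * indicator A z \<partial>lborel)"
    proof (cases "x > 0")
      case False
      then show ?thesis using f0[of x] by simp
    next
      case True
      have "(\<integral>\<^sup>+y. g y * indicator A (x * y) \<partial>lborel) =
          ennreal \<bar>1 / x\<bar> * (\<integral>\<^sup>+z. g (0 + (1/x) * z) * indicator A (x * (0 + (1/x) * z)) \<partial>lborel)"
        using True by (intro nn_integral_real_affine) auto
      also have "\<dots> = ennreal (1 / x) * (\<integral>\<^sup>+z. g (z / x) * indicator A z \<partial>lborel)"
        using True by simp
      also have "\<dots> = (\<integral>\<^sup>+z. ennreal (1 / x) * (g (z / x) * indicator A z) \<partial>lborel)"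
        by (intro nn_integral_cmult[symmetric]) auto
      finally have "f x * (\<integral>\<^sup>+y. g y * indicator A (x * y) \<partial>lborel) =
          f x * (\<integral>\<^sup>+z. ennreal (1 / x) * (g (z / x) * indicator A z) \<partial>lborel)" by simp
      also have "\<dots> = (\<integral>\<^sup>+z. f x * (ennreal (1 / x) * (g (z / x) * indicator A z)) \<partial>lborel)"
        by (intro nn_integral_cmult[symmetric]) auto
      finally show ?thesis by (simp add: ac_simps)
    qed
  qed
  also have "\<dots> = (\<integral>\<^sup>+z. (\<integral>\<^sup>+x. f x * g (z / x) * ennreal (1 / x) * indicator A z \<partial>lborel) \<partial>lborel)"
    by (intro lborel_pair.Fubini') simp
  also have "\<dots> = (\<integral>\<^sup>+z. (\<integral>\<^sup>+x. f x * g (z / x) * ennreal (1 / x) \<partial>lborel) * indicator A z \<partial>lborel)"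
    by (intro nn_integral_cong nn_integral_multc) auto
  also have "\<dots> = emeasure ?r A"
    by (simp add: emeasure_density)
  finally show "emeasure ?l A = emeasure ?r A" .
qed simp

lemma (in prob_space) distributed_product:
  fixes f g :: "real \<Rightarrow> ennreal" and X Y :: "'a \<Rightarrow> real"
  assumes indep: "indep_var borel X borel Y"
  assumes X: "distributed M lborel X f"
  assumes Y: "distributed M lborel Y g"
  assumes f0: "\<And>t. t \<le> 0 \<Longrightarrow> f t = 0"
  shows "distributed M lborel (\<lambda>x. X x * Y x) (\<lambda>z. \<integral>\<^sup>+t. f t * g (z / t) * ennreal (1 / t) \<partial>lborel)"
  unfolding distributed_def
proof safe
  have fg[measurable]: "f \<in> borel_measurable borel" "g \<in> borel_measurable borel"
    using distributed_borel_measurable[OF X] distributed_borel_measurable[OF Y] by simp_all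
  show "(\<lambda>z. \<integral>\<^sup>+t. f t * g (z / t) * ennreal (1 / t) \<partial>lborel) \<in> borel_measurable lborel"
    by measurable
  have "distr M borel (\<lambda>x. X x * Y x) = distr (distr M borel X \<Otimes>\<^sub>M distr M borel Y) borel (\<lambda>(x, y). x * y)"
    using distributed_measurable[OF X] distributed_measurable[OF Y]
    by (intro prod_indep_random_variable) (auto simp: indep)
  also have "\<dots> = distr (density lborel f \<Otimes>\<^sub>M density lborel g) borel (\<lambda>(x, y). x * y)"
    using distributed_distr_eq_density[OF X] distributed_distr_eq_density[OF Y]
    by (simp cong: distr_cong)
  also have "\<dots> = density lborel (\<lambda>z. \<integral>\<^sup>+t. f t * g (z / t) * ennreal (1 / t) \<partial>lborel)"
  proof (rule product_density)
    show "finite_measure (density lborel f)"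
      using X by (rule distributed_finite_measure_density)
    show "finite_measure (density lborel g)"
      using Y by (rule distributed_finite_measure_density)
  qed (use f0 in auto)
  finally show "distr M lborel (\<lambda>x. X x * Y x) = density lborel (\<lambda>z. \<integral>\<^sup>+t. f t * g (z / t) * ennreal (1 / t) \<partial>lborel)"
    by (simp cong: distr_cong)
  show "random_variable lborel (\<lambda>x. X x * Y x)"
    using distributed_measurable[OF X] distributed_measurable[OF Y] by simp
qed

definition basic_dens :: "(real \<Rightarrow> real) \<Rightarrow> bool" where
  "basic_dens f \<longleftrightarrow> (\<forall>x. 0 \<le> f x) \<and> (\<forall>x. x \<le> 0 \<longrightarrow> f x = 0) \<and> continuous_on {0<..} f"

definition lowb :: "(real \<Rightarrow> real) \<Rightarrow> real \<Rightarrow> bool" where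
  "lowb f m \<longleftrightarrow> (\<exists>\<delta>>0. \<exists>c>0. \<forall>x\<in>{0<..\<delta>}. c * x powr (m - 1) \<le> f x)"

definition supb :: "(real \<Rightarrow> real) \<Rightarrow> real \<Rightarrow> bool" where
  "supb f m \<longleftrightarrow> (\<exists>C. \<forall>x>0. f x \<le> C * x powr (m - 1))"

definition pupb :: "(real \<Rightarrow> real) \<Rightarrow> real \<Rightarrow> bool" where
  "pupb f m \<longleftrightarrow> (\<forall>w. 0 < w \<and> w < m \<longrightarrow> (\<exists>C. \<forall>x>0. f x \<le> C * x powr (w - 1)))"

lemma gg_basic:
  assumes l: "l > 0" and c: "c > 0"
  shows "basic_dens (gg_density l c 1)"
  unfolding basic_dens_def
proof (intro conjI allI impI)
  fix x :: real
  show "0 \<le> gg_density l c 1 x" using l c by (simp add: gg_density_def)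
  show "x \<le> 0 \<Longrightarrow> gg_density l c 1 x = 0" by (simp add: gg_density_def)
  have "continuous_on {0<..} (\<lambda>x::real. (Gamma (l + c) / (Gamma l * Gamma c))
        * x powr (l - 1) * (1 + x) powr (- (l + c)))"
    by (intro continuous_intros) auto
  then show "continuous_on {0<..} (gg_density l c 1)"
    by (rule continuous_on_cong[THEN iffD1, rotated 2]) (auto simp: gg_density_def)
qed

lemma gg_upper:
  assumes l: "l > 0" and c: "c > 0" and w: "0 < w" "w \<le> l" and x: "x > 0"
  shows "gg_density l c 1 x \<le> (Gamma (l + c) / (Gamma l * Gamma c)) * x powr (w - 1)"
proof -
  define A where "A = Gamma (l + c) / (Gamma l * Gamma c)"
  have A: "A > 0" using l c by (simp add: A_def)
  have "x powr (l - 1) * (1 + x) powr (- (l + c)) \<le> x powr (w - 1)"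
  proof (cases "x \<le> 1")
    case True
    have "x powr (l - 1) * (1 + x) powr (- (l + c)) \<le> x powr (l - 1) * 1"
      using x l c powr_mono2'[of "-(l+c)" 1 "1+x"] by (intro mult_left_mono) auto
    also have "\<dots> \<le> x powr (w - 1)" using True x w by (simp add: powr_mono')
    finally show ?thesis .
  next
    case False
    have "(1 + x) powr (- (l + c)) \<le> x powr (- (l + c))"
      using x l c by (intro powr_mono2') auto
    then have "x powr (l - 1) * (1 + x) powr (- (l + c)) \<le> x powr (l - 1) * x powr (- (l + c))"
      by (intro mult_left_mono) auto
    also have "\<dots> = x powr (- 1 - c)" using x by (simp add: powr_add[symmetric])
    also have "\<dots> \<le> x powr (w - 1)" using False w c by (intro powr_mono) auto
    finally show ?thesis .
  qed
  then have "A * (x powr (l - 1) * (1 + x) powr (- (l + c))) \<le> A * x powr (w - 1)"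
    using A by (intro mult_left_mono) auto
  then show ?thesis using x by (simp add: gg_density_def A_def mult.assoc)
qed

lemma gg_lower:
  assumes l: "l > 0" and c: "c > 0" and x: "x \<in> {0<..1}"
  shows "(Gamma (l + c) / (Gamma l * Gamma c)) * 2 powr (- (l + c)) * x powr (l - 1) \<le> gg_density l c 1 x"
proof -
  define A where "A = Gamma (l + c) / (Gamma l * Gamma c)"
  have A: "A > 0" using l c by (simp add: A_def)
  have "2 powr (- (l + c)) \<le> (1 + x) powr (- (l + c))"
    using x l c by (intro powr_mono2') auto
  then have "A * x powr (l - 1) * 2 powr (- (l + c)) \<le> A * x powr (l - 1) * (1 + x) powr (- (l + c))"
    using A by (intro mult_left_mono) auto
  then show ?thesis using x by (simp add: gg_density_def A_def ac_simps)
qed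

lemma gg_props:
  assumes l: "l > 0" and c: "c > 0"
  shows "basic_dens (gg_density l c 1)" "supb (gg_density l c 1) l" "pupb (gg_density l c 1) l"
    "lowb (gg_density l c 1) l"
proof -
  define A where "A = Gamma (l + c) / (Gamma l * Gamma c)"
  have A: "A > 0" using l c by (simp add: A_def)
  show "basic_dens (gg_density l c 1)" using gg_basic[OF l c] .
  show "supb (gg_density l c 1) l" unfolding supb_def
    using gg_upper[OF l c l order.refl] by blast
  show "pupb (gg_density l c 1) l" unfolding pupb_def
    using gg_upper[OF l c] by (meson less_le)
  have "\<forall>x\<in>{0<..1}. (A * 2 powr (- (l + c))) * x powr (l - 1) \<le> gg_density l c 1 x"
    using gg_lower[OF l c] by (simp add: A_def)
  moreover have "A * 2 powr (- (l + c)) > 0" using A by simp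
  ultimately show "lowb (gg_density l c 1) l" unfolding lowb_def
    using zero_less_one by blast
qed

lemma basic_isCont:
  assumes "basic_dens f" "y \<noteq> 0"
  shows "isCont f y"
proof (cases "y > 0")
  case True
  have "continuous_on {0<..} f" using assms(1) by (simp add: basic_dens_def)
  then show ?thesis using True continuous_on_eq_continuous_at[OF open_greaterThan] by blast
next
  case False
  then have y: "y < 0" using assms(2) by simp
  have "continuous_on {..<0} (\<lambda>_. 0::real)" by simp
  then have "continuous_on {..<0} f"
    by (rule continuous_on_cong[THEN iffD1, rotated 2]) (use assms(1) in \<open>auto simp: basic_dens_def\<close>)
  then show ?thesis using y continuous_on_eq_continuous_at[OF open_lessThan] by blast
qed

lemma basic_measurable:
  assumes "basic_dens f"
  shows "f \<in> borel_measurable borel"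
proof -
  have "(\<lambda>x. indicator {0<..} x *\<^sub>R f x) \<in> borel_measurable borel"
    using assms by (intro borel_measurable_continuous_on_indicator) (auto simp: basic_dens_def)
  moreover have "(\<lambda>x. indicator {0<..} x *\<^sub>R f x) = f"
    using assms by (auto simp: basic_dens_def indicator_def fun_eq_iff)
  ultimately show ?thesis by simp
qed

lemma powr_interval_lower:
  fixes p q y e :: real
  assumes "0 < p" "p \<le> y" "y \<le> q"
  shows "min (p powr e) (q powr e) \<le> y powr e"
proof (cases "e \<ge> 0")
  case True
  then have "p powr e \<le> y powr e" using assms by (intro powr_mono2) auto
  then show ?thesis by simp
next
  case False
  then have "q powr e \<le> y powr e" using assms by (intro powr_mono2') auto
  then show ?thesis by simp
qed

lemma powr_interval_upper:
  fixes p q y e :: real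
  assumes "0 < p" "p \<le> y" "y \<le> q"
  shows "y powr e \<le> max (p powr e) (q powr e)"
proof (cases "e \<ge> 0")
  case True
  then have "y powr e \<le> q powr e" using assms by (intro powr_mono2) auto
  then show ?thesis by simp
next
  case False
  then have "y powr e \<le> p powr e" using assms by (intro powr_mono2') auto
  then show ?thesis by simp
qed

lemma supb_nonneg_const:
  assumes "basic_dens f" "\<forall>x>0. f x \<le> C * x powr (m - 1)"
  shows "C \<ge> 0"
  using assms by (auto simp: basic_dens_def) (metis powr_one_eq_one mult.right_neutral zero_less_one order.trans)

lemma sum_step:
  fixes X Y :: "'a \<Rightarrow> real" and f g :: "real \<Rightarrow> real"
  assumes M: "prob_space M"
    and ind: "prob_space.indep_var M borel X borel Y"
    and X: "distributed M lborel X (\<lambda>x. ennreal (f x))"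
    and Y: "distributed M lborel Y (\<lambda>x. ennreal (g x))"
    and bf: "basic_dens f" and bg: "basic_dens g"
    and a: "a > 0" and b: "b > 0"
    and sf: "supb f a" and sg: "supb g b" and lf: "lowb f a" and lg: "lowb g b"
  shows "\<exists>h. distributed M lborel (\<lambda>\<omega>. X \<omega> + Y \<omega>) (\<lambda>x. ennreal (h x))
            \<and> basic_dens h \<and> supb h (a + b) \<and> lowb h (a + b)"
proof -
  obtain Cf where Cf: "\<forall>x>0. f x \<le> Cf * x powr (a - 1)" using sf by (auto simp: supb_def)
  obtain Cg where Cg: "\<forall>x>0. g x \<le> Cg * x powr (b - 1)" using sg by (auto simp: supb_def)
  have Cf0: "Cf \<ge> 0" by (rule supb_nonneg_const[OF bf Cf])
  have Cg0: "Cg \<ge> 0" by (rule supb_nonneg_const[OF bg Cg])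
  have fnn: "\<And>x. 0 \<le> f x" and f0: "\<And>x. x \<le> 0 \<Longrightarrow> f x = 0" using bf by (auto simp: basic_dens_def)
  have gnn: "\<And>x. 0 \<le> g x" and g0: "\<And>x. x \<le> 0 \<Longrightarrow> g x = 0" using bg by (auto simp: basic_dens_def)
  have fm[measurable]: "f \<in> borel_measurable borel" by (rule basic_measurable[OF bf])
  have gm[measurable]: "g \<in> borel_measurable borel" by (rule basic_measurable[OF bg])
  define e where "e = a + b - 2"
  define B where "B s = indicator {0..1::real} s * (s powr (b - 1) * (1 - s) powr (a - 1))" for s
  have Bint: "integrable lborel B"
    using integrable_Beta[OF b a] unfolding set_integrable_def B_def by simp
  have Bnn: "B s \<ge> 0" for s by (simp add: B_def)
  have Bm[measurable]: "B \<in> borel_measurable borel" using Bint by (simp add: borel_measurable_integrable)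
  define k where "k x s = f (x - x * s) * g (x * s)" for x s
  have knn: "k x s \<ge> 0" for x s by (simp add: k_def fnn gnn)
  have km[measurable]: "k x \<in> borel_measurable borel" for x unfolding k_def by measurable
  have kbound: "k x s \<le> Cf * Cg * x powr e * B s" if x: "x > 0" for x s
  proof (cases "0 < s \<and> s < 1")
    case True
    have "f (x - x * s) \<le> Cf * (x * (1 - s)) powr (a - 1)"
      using Cf True x by (auto simp: algebra_simps)
    also have "\<dots> = Cf * (x powr (a - 1) * (1 - s) powr (a - 1))"
      using True x by (simp add: powr_mult)
    finally have F: "f (x - x * s) \<le> Cf * (x powr (a - 1) * (1 - s) powr (a - 1))" .
    have "g (x * s) \<le> Cg * (x * s) powr (b - 1)"
      using Cg True x by auto
    also have "\<dots> = Cg * (x powr (b - 1) * s powr (b - 1))"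
      using True x by (simp add: powr_mult)
    finally have G: "g (x * s) \<le> Cg * (x powr (b - 1) * s powr (b - 1))" .
    have "k x s \<le> (Cf * (x powr (a - 1) * (1 - s) powr (a - 1))) * (Cg * (x powr (b - 1) * s powr (b - 1)))"
      unfolding k_def using F G fnn gnn Cf0 by (intro mult_mono) auto
    also have "\<dots> = Cf * Cg * (x powr (a - 1) * x powr (b - 1)) * (s powr (b - 1) * (1 - s) powr (a - 1))"
      by (simp add: ac_simps)
    also have "x powr (a - 1) * x powr (b - 1) = x powr e"
      using x by (simp add: e_def powr_add[symmetric])
    finally show ?thesis using True by (simp add: B_def)
  next
    case False
    have "k x s = 0"
    proof (cases "0 < s")
      case False
      then have "x * s \<le> 0" using x by (simp add: mult_nonneg_nonpos)
      then show "k x s = 0" by (simp add: k_def g0)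
    next
      case True
      with \<open>\<not> (0 < s \<and> s < 1)\<close> have "\<not> s < 1" by simp
      then have "x - x * s \<le> 0" using x
        by (metis diff_le_0_iff_le mult.right_neutral mult_left_mono not_le less_imp_le)
      then show "k x s = 0" by (simp add: k_def f0)
    qed
    then show ?thesis using Cf0 Cg0 Bnn[of s] x by simp
  qed
  have kint: "integrable lborel (k x)" if x: "x > 0" for x
  proof (rule Bochner_Integration.integrable_bound)
    show "integrable lborel (\<lambda>s. Cf * Cg * x powr e * B s)" using Bint by simp
    show "AE s in lborel. norm (k x s) \<le> norm (Cf * Cg * x powr e * B s)"
      using kbound[OF x] knn by (intro AE_I2) (simp, metis abs_ge_self order.trans abs_of_nonneg)
  qed simp
  define h where "h x = (if x > 0 then x * (\<integral>s. k x s \<partial>lborel) else 0)" for x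
  have dens_eq: "(\<integral>\<^sup>+y. ennreal (f (x - y)) * ennreal (g y) \<partial>lborel) = ennreal (h x)" for x
  proof (cases "x > 0")
    case True
    have "(\<integral>\<^sup>+y. ennreal (f (x - y)) * ennreal (g y) \<partial>lborel)
        = ennreal \<bar>x\<bar> * (\<integral>\<^sup>+s. ennreal (f (x - (0 + x * s))) * ennreal (g (0 + x * s)) \<partial>lborel)"
      using True by (intro nn_integral_real_affine) auto
    also have "\<dots> = ennreal x * (\<integral>\<^sup>+s. ennreal (k x s) \<partial>lborel)"
      using True by (simp add: k_def ennreal_mult fnn gnn)
    also have "(\<integral>\<^sup>+s. ennreal (k x s) \<partial>lborel) = ennreal (\<integral>s. k x s \<partial>lborel)"
      by (intro nn_integral_eq_integral kint[OF True] AE_I2 knn)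
    also have "ennreal x * \<dots> = ennreal (h x)"
      using True by (simp add: h_def ennreal_mult integral_nonneg knn)
    finally show ?thesis .
  next
    case False
    have "ennreal (f (x - y)) * ennreal (g y) = 0" for y
      using False by (cases "y > 0") (auto simp: f0 g0)
    then have "(\<integral>\<^sup>+y. ennreal (f (x - y)) * ennreal (g y) \<partial>lborel) = 0"
      by (simp only:) simp
    then show ?thesis using False by (simp add: h_def)
  qed
  have dist: "distributed M lborel (\<lambda>\<omega>. X \<omega> + Y \<omega>) (\<lambda>x. ennreal (h x))"
    using prob_space.distributed_convolution[OF M ind X Y] dens_eq by simp
  have hnn: "h x \<ge> 0" for x
    by (simp add: h_def integral_nonneg knn)
  have hcont: "continuous_on {0<..} h"
  proof -
    have "isCont h x0" if x0: "x0 > 0" for x0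
    proof -
      have ev: "eventually (\<lambda>x. h x = x * (\<integral>s. k x s \<partial>lborel)) (nhds x0)"
      proof -
        have "eventually (\<lambda>x. x \<in> {0<..}) (nhds x0)"
          using x0 by (intro eventually_nhds_in_open) auto
        then show ?thesis by eventually_elim (simp add: h_def)
      qed
      define U where "U = {x0 / 2<..<2 * x0}"
      define Mx where "Mx = max ((x0 / 2) powr e) ((2 * x0) powr e)"
      have "isCont (\<lambda>x. \<integral>s. k x s \<partial>lborel) x0"
      proof (rule isCont_param_integral[where U=U and w="\<lambda>s. Cf * Cg * Mx * B s"])
        show "open U" "x0 \<in> U" using x0 by (auto simp: U_def)
        show "k x \<in> borel_measurable lborel" for x by simp
        show "integrable lborel (\<lambda>s. Cf * Cg * Mx * B s)" using Bint by simp
        show "\<bar>k x s\<bar> \<le> Cf * Cg * Mx * B s" if "x \<in> U" for x s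
        proof -
          have x: "x > 0" "x0 / 2 \<le> x" "x \<le> 2 * x0" using that x0 by (auto simp: U_def)
          have "x powr e \<le> Mx" unfolding Mx_def using x x0 by (intro powr_interval_upper) auto
          then have "Cf * Cg * x powr e * B s \<le> Cf * Cg * Mx * B s"
            using Cf0 Cg0 Bnn[of s] by (intro mult_right_mono mult_left_mono) auto
          then show ?thesis using kbound[OF x(1), of s] knn[of x s] by simp
        qed
        show "isCont (\<lambda>x. k x s) x0" for s
        proof (cases "s = 0 \<or> s = 1")
          case True
          then have "(\<lambda>x. k x s) = (\<lambda>x. 0)" by (auto simp: k_def f0 g0 fun_eq_iff)
          then show ?thesis by (simp only:) (rule continuous_const)
        next
          case False
          have ne1: "x0 - x0 * s \<noteq> 0"
          proof
            assume "x0 - x0 * s = 0"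
            then have "x0 * (1 - s) = 0" by (simp add: algebra_simps)
            then show False using False x0 by simp
          qed
          have ne2: "x0 * s \<noteq> 0" using False x0 by simp
          have i1: "isCont (\<lambda>x. x - x * s) x0" by (intro continuous_intros)
          have i2: "isCont (\<lambda>x. x * s) x0" by (intro continuous_intros)
          have c1: "isCont (\<lambda>x. f (x - x * s)) x0"
            by (rule isCont_o2[OF i1 basic_isCont[OF bf ne1]])
          have c2: "isCont (\<lambda>x. g (x * s)) x0"
            by (rule isCont_o2[OF i2 basic_isCont[OF bg ne2]])
          show ?thesis unfolding k_def using c1 c2 by (rule isCont_mult)
        qed
      qed
      then have "isCont (\<lambda>x. x * (\<integral>s. k x s \<partial>lborel)) x0"
        by (intro isCont_mult) auto
      then show ?thesis using isCont_cong[OF ev] by simp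
    qed
    then show ?thesis using continuous_on_eq_continuous_at[OF open_greaterThan] by blast
  qed
  have bh: "basic_dens h" unfolding basic_dens_def using hnn hcont by (auto simp: h_def)
  have shb: "supb h (a + b)"
  proof -
    define IB where "IB = (\<integral>s. B s \<partial>lborel)"
    have "h x \<le> (Cf * Cg * IB) * x powr (a + b - 1)" if x: "x > 0" for x
    proof -
      have "(\<integral>s. k x s \<partial>lborel) \<le> (\<integral>s. Cf * Cg * x powr e * B s \<partial>lborel)"
        using kint[OF x] Bint kbound[OF x] by (intro integral_mono) auto
      also have "\<dots> = Cf * Cg * x powr e * IB" by (simp add: IB_def)
      finally have "x * (\<integral>s. k x s \<partial>lborel) \<le> x * (Cf * Cg * x powr e * IB)"
        using x by (intro mult_left_mono) auto
      also have "\<dots> = Cf * Cg * IB * (x powr 1 * x powr e)" using x by simp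
      also have "x powr 1 * x powr e = x powr (a + b - 1)"
      proof -
        have "a + b - 1 = 1 + e" by (simp add: e_def)
        then show ?thesis by (simp only: powr_add)
      qed
      finally show ?thesis using x by (simp add: h_def)
    qed
    then show ?thesis unfolding supb_def by blast
  qed
  have lhb: "lowb h (a + b)"
  proof -
    obtain \<delta>f cf where df: "\<delta>f > 0" "cf > 0" "\<And>x. x \<in> {0<..\<delta>f} \<Longrightarrow> cf * x powr (a - 1) \<le> f x"
      using lf by (auto simp: lowb_def)
    obtain \<delta>g cg where dg: "\<delta>g > 0" "cg > 0" "\<And>x. x \<in> {0<..\<delta>g} \<Longrightarrow> cg * x powr (b - 1) \<le> g x"
      using lg by (auto simp: lowb_def)
    define \<kappa> where "\<kappa> = min ((1/3) powr (a - 1)) ((2/3) powr (a - 1)) * min ((1/3) powr (b - 1)) ((2/3) powr (b - 1))"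
    have \<kappa>: "\<kappa> > 0" by (simp add: \<kappa>_def)
    define \<delta> where "\<delta> = min \<delta>f \<delta>g"
    have "h x \<ge> (cf * cg * \<kappa> / 3) * x powr (a + b - 1)" if x: "x \<in> {0<..\<delta>}" for x
    proof -
      have x0: "x > 0" using x by simp
      have klow: "cf * cg * \<kappa> * x powr e * indicator {1/3..2/3} s \<le> k x s" for s
      proof (cases "s \<in> {1/3..2/3}")
        case True
        have u1: "x * (1 - s) \<le> x" "x * s \<le> x" using True x0 by (auto intro!: mult_left_le)
        have u2: "x * (1 - s) > 0" "x * s > 0" using True x0 by auto
        have u3: "x \<le> \<delta>f" "x \<le> \<delta>g" using x by (auto simp: \<delta>_def)
        have s1: "x * (1 - s) \<in> {0<..\<delta>f}" using u1 u2 u3 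
          by (metis greaterThanAtMost_iff order.trans)
        have s2: "x * s \<in> {0<..\<delta>g}" using u1 u2 u3
          by (metis greaterThanAtMost_iff order.trans)
        have F: "cf * (x powr (a - 1) * (1 - s) powr (a - 1)) \<le> f (x - x * s)"
        proof -
          have e1: "x - x * s = x * (1 - s)" by (simp add: algebra_simps)
          have e2: "(x * (1 - s)) powr (a - 1) = x powr (a - 1) * (1 - s) powr (a - 1)"
            using x0 True by (simp add: powr_mult)
          show ?thesis using df(3)[OF s1] unfolding e1 e2 .
        qed
        have G: "cg * (x powr (b - 1) * s powr (b - 1)) \<le> g (x * s)"
          using dg(3)[OF s2] x0 True by (simp add: powr_mult)
        have Ka: "min ((1/3) powr (a - 1)) ((2/3) powr (a - 1)) \<le> (1 - s) powr (a - 1)"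
          using True by (intro powr_interval_lower) auto
        have Kb: "min ((1/3) powr (b - 1)) ((2/3) powr (b - 1)) \<le> s powr (b - 1)"
          using True by (intro powr_interval_lower) auto
        have "\<kappa> \<le> (1 - s) powr (a - 1) * s powr (b - 1)"
          unfolding \<kappa>_def using Ka Kb by (intro mult_mono) auto
        then have "cf * cg * \<kappa> * x powr e \<le> cf * cg * ((1 - s) powr (a - 1) * s powr (b - 1)) * x powr e"
          using df(2) dg(2) by (intro mult_right_mono mult_left_mono) auto
        also have "\<dots> = (cf * (x powr (a - 1) * (1 - s) powr (a - 1))) * (cg * (x powr (b - 1) * s powr (b - 1)))"
          using x0 by (simp add: e_def powr_add[symmetric] algebra_simps)
        also have "\<dots> \<le> f (x - x * s) * g (x * s)"
          using F G df(2) dg(2) fnn by (intro mult_mono) auto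
        finally show ?thesis using True by (simp add: k_def)
      qed (simp add: knn)
      have "(\<integral>s. cf * cg * \<kappa> * x powr e * indicator {1/3..2/3::real} s \<partial>lborel) \<le> (\<integral>s. k x s \<partial>lborel)"
        using kint[OF x0] klow by (intro integral_mono) auto
      moreover have "(\<integral>s. cf * cg * \<kappa> * x powr e * indicator {1/3..2/3::real} s \<partial>lborel) = cf * cg * \<kappa> * x powr e / 3"
        by simp
      ultimately have L: "cf * cg * \<kappa> * x powr e / 3 * x \<le> (\<integral>s. k x s \<partial>lborel) * x"
        using x0 by (intro mult_right_mono) auto
      have P: "x powr e * x = x powr (a + b - 1)"
      proof -
        have "a + b - 1 = e + 1" by (simp add: e_def)
        then show ?thesis using x0 by (simp add: powr_add)
      qed
      have "(cf * cg * \<kappa> / 3) * x powr (a + b - 1) = cf * cg * \<kappa> * x powr e / 3 * x"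
        unfolding P[symmetric] by (simp add: ac_simps)
      also have "\<dots> \<le> (\<integral>s. k x s \<partial>lborel) * x" by (rule L)
      also have "\<dots> = h x" using x0 by (simp add: h_def mult.commute)
      finally show ?thesis .
    qed
    moreover have "\<delta> > 0" "cf * cg * \<kappa> / 3 > 0" using df dg \<kappa> by (auto simp: \<delta>_def)
    ultimately show ?thesis unfolding lowb_def by blast
  qed
  show ?thesis using dist bh shb lhb by blast
qed

lemma dens_integrable:
  fixes X :: "'a \<Rightarrow> real" and f :: "real \<Rightarrow> real"
  assumes M: "prob_space M" and X: "distributed M lborel X (\<lambda>x. ennreal (f x))"
    and nn: "\<And>x. 0 \<le> f x"
  shows "integrable lborel f"
proof -
  interpret prob_space M by (rule M)
  have "integrable lborel (\<lambda>x. f x * 1) \<longleftrightarrow> integrable M (\<lambda>x. 1::real)"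
    by (rule distributed_integrable[OF X]) (auto simp: nn)
  then show ?thesis by simp
qed

lemma powr_scaled_lower:
  fixes z p q y e :: real
  assumes "0 < z" "0 < p" "p * z \<le> y" "y \<le> q * z"
  shows "z powr e * min (p powr e) (q powr e) \<le> y powr e"
proof (cases "e \<ge> 0")
  case True
  have "(p * z) powr e \<le> y powr e" using assms True by (intro powr_mono2) auto
  moreover have "(p * z) powr e = z powr e * p powr e" using assms by (simp add: powr_mult)
  moreover have "z powr e * min (p powr e) (q powr e) \<le> z powr e * p powr e"
    by (intro mult_left_mono) auto
  ultimately show ?thesis by linarith
next
  case False
  have y0: "0 < y" using assms mult_pos_pos[of p z] by linarith
  have "(q * z) powr e \<le> y powr e" using assms False y0 by (intro powr_mono2') auto
  moreover have "(q * z) powr e = z powr e * q powr e" using assms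
    by (subst powr_mult) (auto intro: order.trans[of 0 "p * z"])
  moreover have "z powr e * min (p powr e) (q powr e) \<le> z powr e * q powr e"
    by (intro mult_left_mono) auto
  ultimately show ?thesis by linarith
qed

lemma powr_div_aux:
  fixes z t w :: real
  assumes "0 < z" "0 < t"
  shows "(z / t) powr (w - 1) / t = z powr (w - 1) * t powr (- w)"
proof -
  have tw: "t powr (w - 1) * t = t powr w" using assms powr_add[of t "w - 1" 1] by simp
  have "(z / t) powr (w - 1) / t = z powr (w - 1) / t powr (w - 1) / t" using assms by (simp add: powr_divide)
  also have "\<dots> = z powr (w - 1) / (t powr (w - 1) * t)" by simp
  also have "\<dots> = z powr (w - 1) / t powr w" by (simp only: tw)
  also have "\<dots> = z powr (w - 1) * t powr (- w)" by (simp add: powr_minus divide_inverse)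
  finally show ?thesis .
qed

lemma moment_integrable:
  fixes f :: "real \<Rightarrow> real"
  assumes bf: "basic_dens f" and fi: "integrable lborel f" and pf: "pupb f a"
    and w: "0 < w" "w < a"
  shows "integrable lborel (\<lambda>t. f t * t powr (- w))"
proof -
  have fnn: "\<And>x. 0 \<le> f x" and f0: "\<And>x. x \<le> 0 \<Longrightarrow> f x = 0" using bf by (auto simp: basic_dens_def)
  have fm[measurable]: "f \<in> borel_measurable borel" by (rule basic_measurable[OF bf])
  define w' where "w' = (w + a) / 2"
  have w': "0 < w'" "w' < a" "w < w'" using w by (auto simp: w'_def)
  obtain C where C: "\<forall>x>0. f x \<le> C * x powr (w' - 1)" using pf w' by (auto simp: pupb_def)
  have C0: "C \<ge> 0" by (rule supb_nonneg_const[OF bf C])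
  define P where "P t = indicator {0..1::real} t * (t powr ((w' - w) - 1) * (1 - t) powr (1 - 1))" for t
  have Pint: "integrable lborel P"
    using integrable_Beta[of "w' - w" 1] w' unfolding set_integrable_def P_def by simp
  show ?thesis
  proof (rule Bochner_Integration.integrable_bound)
    show "integrable lborel (\<lambda>t. C * P t + f t)" using Pint fi by simp
    show "(\<lambda>t. f t * t powr (- w)) \<in> borel_measurable lborel" by measurable
    show "AE t in lborel. norm (f t * t powr (- w)) \<le> norm (C * P t + f t)"
    proof (intro AE_I2)
      fix t :: real
      have Pnn: "P t \<ge> 0" by (simp add: P_def)
      have "f t * t powr (- w) \<le> C * P t + f t"
      proof (cases "t \<le> 0")
        case True then show ?thesis using C0 Pnn by (simp add: f0)
      next
        case False
        show ?thesis
        proof (cases "t < 1")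
          case True
          have "f t * t powr (- w) \<le> C * t powr (w' - 1) * t powr (- w)"
            using C False by (intro mult_right_mono) auto
          also have "\<dots> = C * t powr (w' - w - 1)"
          proof -
            have "w' - w - 1 = (w' - 1) + (- w)" by simp
            then show ?thesis by (simp only: powr_add mult.assoc)
          qed
          also have "\<dots> = C * P t" using True False by (simp add: P_def)
          finally show ?thesis using fnn[of t] by linarith
        next
          case True': False
          have "1 \<le> t powr w" using True' w ge_one_powr_ge_zero[of t w] by simp
          then have "t powr (- w) \<le> 1" by (simp add: powr_minus_divide divide_le_eq_1)
          then have "f t * t powr (- w) \<le> f t * 1" by (intro mult_left_mono fnn)
          then show ?thesis using C0 Pnn by (simp add: add_increasing)
        qed
      qed
      moreover have "0 \<le> f t * t powr (- w)" using fnn by simp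
      ultimately show "norm (f t * t powr (- w)) \<le> norm (C * P t + f t)" by simp
    qed
  qed
qed

lemma prod_step:
  fixes X Y :: "'a \<Rightarrow> real" and f g :: "real \<Rightarrow> real"
  assumes M: "prob_space M"
    and ind: "prob_space.indep_var M borel X borel Y"
    and X: "distributed M lborel X (\<lambda>x. ennreal (f x))"
    and Y: "distributed M lborel Y (\<lambda>x. ennreal (g x))"
    and bf: "basic_dens f" and bg: "basic_dens g"
    and a: "a > 0" and b: "b > 0"
    and pf: "pupb f a" and pg: "pupb g b" and lf: "lowb f a" and lg: "lowb g b"
  shows "\<exists>h. distributed M lborel (\<lambda>\<omega>. X \<omega> * Y \<omega>) (\<lambda>x. ennreal (h x))
            \<and> basic_dens h \<and> pupb h (min a b) \<and> lowb h (min a b)"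
proof -
  have fnn: "\<And>x. 0 \<le> f x" and f0: "\<And>x. x \<le> 0 \<Longrightarrow> f x = 0" using bf by (auto simp: basic_dens_def)
  have gnn: "\<And>x. 0 \<le> g x" and g0: "\<And>x. x \<le> 0 \<Longrightarrow> g x = 0" using bg by (auto simp: basic_dens_def)
  have fm[measurable]: "f \<in> borel_measurable borel" by (rule basic_measurable[OF bf])
  have gm[measurable]: "g \<in> borel_measurable borel" by (rule basic_measurable[OF bg])
  have fi: "integrable lborel f" by (rule dens_integrable[OF M X fnn])
  define k where "k z t = f t * g (z / t) / t" for z t
  have knn: "k z t \<ge> 0" for z t
    by (cases "t > 0") (auto simp: k_def f0 fnn gnn)
  have kz: "k z t = 0" if "z \<le> 0" for z t
  proof (cases "t > 0")
    case True
    then have "z / t \<le> 0" using that by (simp add: divide_nonpos_pos)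
    then show ?thesis by (simp add: k_def g0)
  qed (simp add: k_def f0)
  have km[measurable]: "k z \<in> borel_measurable borel" for z unfolding k_def by measurable
  have dom: "\<exists>Cg\<ge>0. \<forall>z>0. \<forall>t. k z t \<le> Cg * z powr (w - 1) * (f t * t powr (- w))"
    if w: "0 < w" "w < min a b" for w
  proof -
    obtain Cg where Cg: "\<forall>x>0. g x \<le> Cg * x powr (w - 1)" using pg w by (auto simp: pupb_def)
    have Cg0: "Cg \<ge> 0" by (rule supb_nonneg_const[OF bg Cg])
    have "k z t \<le> Cg * z powr (w - 1) * (f t * t powr (- w))" if z: "z > 0" for z t
    proof (cases "t > 0")
      case True
      have "k z t = f t * (g (z / t) / t)" by (simp add: k_def)
      also have "\<dots> \<le> f t * (Cg * (z / t) powr (w - 1) / t)"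
        using Cg z True fnn by (intro mult_left_mono divide_right_mono) auto
      also have "Cg * (z / t) powr (w - 1) / t = Cg * (z powr (w - 1) * t powr (- w))"
        using powr_div_aux[OF z True, of w] by (metis times_divide_eq_right)
      finally show ?thesis by (simp add: ac_simps)
    qed (simp add: k_def f0)
    then show ?thesis using Cg0 by blast
  qed
  define w0 where "w0 = min a b / 2"
  have w0: "0 < w0" "w0 < min a b" using a b by (auto simp: w0_def)
  obtain Cg0 where Cg0: "Cg0 \<ge> 0" "\<And>z t. z > 0 \<Longrightarrow> k z t \<le> Cg0 * z powr (w0 - 1) * (f t * t powr (- w0))"
    using dom[OF w0] by blast
  have mom0: "integrable lborel (\<lambda>t. f t * t powr (- w0))"
    using moment_integrable[OF bf fi pf w0(1)] w0 by simp
  have kint: "integrable lborel (k z)" for z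
  proof (cases "z > 0")
    case True
    show ?thesis
    proof (rule Bochner_Integration.integrable_bound)
      show "integrable lborel (\<lambda>t. Cg0 * z powr (w0 - 1) * (f t * t powr (- w0)))" using mom0 by simp
      show "AE t in lborel. norm (k z t) \<le> norm (Cg0 * z powr (w0 - 1) * (f t * t powr (- w0)))"
        using Cg0(2)[OF True] knn by (intro AE_I2) (simp, metis abs_ge_self order.trans abs_of_nonneg)
    qed simp
  next
    case False
    then have "k z = (\<lambda>t. 0)" using kz by auto
    then show ?thesis by simp
  qed
  define h where "h z = (\<integral>t. k z t \<partial>lborel)" for z
  have hnn: "h z \<ge> 0" for z by (simp add: h_def integral_nonneg knn)
  have h0: "h z = 0" if "z \<le> 0" for z
  proof -
    have "k z = (\<lambda>t. 0)" using kz that by auto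
    then show ?thesis by (simp add: h_def)
  qed
  have f0': "ennreal (f t) = 0" if "t \<le> 0" for t using f0[OF that] by simp
  have dens_eq: "(\<integral>\<^sup>+t. ennreal (f t) * ennreal (g (z / t)) * ennreal (1 / t) \<partial>lborel) = ennreal (h z)" for z
  proof -
    have "(\<integral>\<^sup>+t. ennreal (f t) * ennreal (g (z / t)) * ennreal (1 / t) \<partial>lborel) = (\<integral>\<^sup>+t. ennreal (k z t) \<partial>lborel)"
    proof (intro nn_integral_cong)
      fix t :: real
      show "ennreal (f t) * ennreal (g (z / t)) * ennreal (1 / t) = ennreal (k z t)"
      proof (cases "t > 0")
        case True
        then show ?thesis by (simp add: k_def ennreal_mult fnn gnn divide_inverse)
      qed (simp add: k_def f0)
    qed
    also have "\<dots> = ennreal (h z)" unfolding h_def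
      by (intro nn_integral_eq_integral kint AE_I2 knn)
    finally show ?thesis .
  qed
  have dist: "distributed M lborel (\<lambda>\<omega>. X \<omega> * Y \<omega>) (\<lambda>x. ennreal (h x))"
    using prob_space.distributed_product[OF M ind X Y f0'] dens_eq by simp
  have hcont: "continuous_on {0<..} h"
  proof -
    have "isCont h z0" if z0: "z0 > 0" for z0
    proof -
      define U where "U = {z0 / 2<..<2 * z0}"
      define Mz where "Mz = max ((z0 / 2) powr (w0 - 1)) ((2 * z0) powr (w0 - 1))"
      show ?thesis unfolding h_def
      proof (rule isCont_param_integral[where U=U and w="\<lambda>t. Cg0 * Mz * (f t * t powr (- w0))"])
        show "open U" "z0 \<in> U" using z0 by (auto simp: U_def)
        show "k z \<in> borel_measurable lborel" for z by simp
        show "integrable lborel (\<lambda>t. Cg0 * Mz * (f t * t powr (- w0)))" using mom0 by simp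
        show "\<bar>k z t\<bar> \<le> Cg0 * Mz * (f t * t powr (- w0))" if "z \<in> U" for z t
        proof -
          have z: "z > 0" "z0 / 2 \<le> z" "z \<le> 2 * z0" using that z0 by (auto simp: U_def)
          have "z powr (w0 - 1) \<le> Mz" unfolding Mz_def using z z0 by (intro powr_interval_upper) auto
          moreover have "0 \<le> f t * t powr (- w0)" using fnn by simp
          ultimately have "Cg0 * z powr (w0 - 1) * (f t * t powr (- w0)) \<le> Cg0 * Mz * (f t * t powr (- w0))"
            using Cg0(1) by (intro mult_right_mono mult_left_mono) auto
          then show ?thesis using Cg0(2)[OF z(1), of t] knn[of z t] by simp
        qed
        show "isCont (\<lambda>z. k z t) z0" for t
        proof (cases "t > 0")
          case False
          then have "(\<lambda>z. k z t) = (\<lambda>z. 0)" by (auto simp: k_def f0 fun_eq_iff)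
          then show ?thesis by (simp only:) (rule continuous_const)
        next
          case True
          have ne: "z0 / t \<noteq> 0" using True z0 by simp
          have i1: "isCont (\<lambda>z. z / t) z0" using True by (intro continuous_intros) auto
          have c1: "isCont (\<lambda>z. g (z / t)) z0"
            by (rule isCont_o2[OF i1 basic_isCont[OF bg ne]])
          show ?thesis unfolding k_def using True by (intro continuous_intros c1) auto
        qed
      qed
    qed
    then show ?thesis using continuous_on_eq_continuous_at[OF open_greaterThan] by blast
  qed
  have bh: "basic_dens h" unfolding basic_dens_def using hnn hcont h0 by auto
  have ph: "pupb h (min a b)" unfolding pupb_def
  proof (intro allI impI)
    fix w assume w: "0 < w \<and> w < min a b"
    obtain Cg where Cg: "Cg \<ge> 0" "\<And>z t. z > 0 \<Longrightarrow> k z t \<le> Cg * z powr (w - 1) * (f t * t powr (- w))"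
      using dom[of w] w by blast
    have mom: "integrable lborel (\<lambda>t. f t * t powr (- w))"
      using moment_integrable[OF bf fi pf, of w] w by simp
    define Mw where "Mw = (\<integral>t. f t * t powr (- w) \<partial>lborel)"
    have "h z \<le> (Cg * Mw) * z powr (w - 1)" if z: "z > 0" for z
    proof -
      have "h z \<le> (\<integral>t. Cg * z powr (w - 1) * (f t * t powr (- w)) \<partial>lborel)"
        unfolding h_def using kint mom Cg(2)[OF z] by (intro integral_mono) auto
      also have "\<dots> = (Cg * Mw) * z powr (w - 1)" by (simp add: Mw_def)
      finally show ?thesis .
    qed
    then show "\<exists>C. \<forall>x>0. h x \<le> C * x powr (w - 1)" by blast
  qed
  have lh: "lowb h (min a b)"
  proof -
    obtain \<delta>f cf where df: "\<delta>f > 0" "cf > 0" "\<And>x. x \<in> {0<..\<delta>f} \<Longrightarrow> cf * x powr (a - 1) \<le> f x"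
      using lf by (auto simp: lowb_def)
    obtain \<delta>g cg where dg: "\<delta>g > 0" "cg > 0" "\<And>x. x \<in> {0<..\<delta>g} \<Longrightarrow> cg * x powr (b - 1) \<le> g x"
      using lg by (auto simp: lowb_def)
    define \<delta> where "\<delta> = \<delta>f * \<delta>g / 2"
    have \<delta>: "\<delta> > 0" using df dg by (simp add: \<delta>_def)
    show ?thesis
    proof (cases "a \<le> b")
      case True
      then have m: "min a b = a" by simp
      define \<kappa>a where "\<kappa>a = min ((1 / \<delta>g) powr (a - 1)) ((2 / \<delta>g) powr (a - 1))"
      define \<kappa>g where "\<kappa>g = min ((\<delta>g / 2) powr (b - 1)) (\<delta>g powr (b - 1))"
      have \<kappa>: "\<kappa>a > 0" "\<kappa>g > 0" using dg by (auto simp: \<kappa>a_def \<kappa>g_def)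
      define c0 where "c0 = cf * cg * \<kappa>a * \<kappa>g * \<delta>g / 2"
      have c0: "c0 > 0" using df dg \<kappa> by (simp add: c0_def)
      have "(c0 / \<delta>g) * z powr (a - 1) \<le> h z" if z: "z \<in> {0<..\<delta>}" for z
      proof -
        have z0: "z > 0" using z by simp
        define C1 where "C1 = c0 * z powr (a - 1) / z"
        have klow: "C1 * indicator {z / \<delta>g..2 * z / \<delta>g} t \<le> k z t" for t
        proof (cases "t \<in> {z / \<delta>g..2 * z / \<delta>g}")
          case True
          have t0: "t > 0" using True z0 dg(1) by (auto intro: less_le_trans[of 0 "z / \<delta>g"])
          have t1: "t \<le> \<delta>f"
          proof -
            have "t \<le> 2 * z / \<delta>g" using True by simp
            also have "\<dots> \<le> 2 * \<delta> / \<delta>g" using z dg(1) by (intro divide_right_mono) auto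
            also have "\<dots> = \<delta>f" using dg(1) by (simp add: \<delta>_def)
            finally show ?thesis .
          qed
          have zt: "\<delta>g / 2 \<le> z / t" "z / t \<le> \<delta>g"
            using True t0 dg(1) z0 by (auto simp: field_simps)
          have F1: "cf * t powr (a - 1) \<le> f t" using df(3)[of t] t0 t1 by simp
          have F2: "z powr (a - 1) * \<kappa>a \<le> t powr (a - 1)"
            unfolding \<kappa>a_def using True z0 dg(1) by (intro powr_scaled_lower) auto
          have G1: "cg * (z / t) powr (b - 1) \<le> g (z / t)"
            using dg(3)[of "z / t"] zt t0 z0 by simp
          have G2: "\<kappa>g \<le> (z / t) powr (b - 1)"
            unfolding \<kappa>g_def using zt dg(1) by (intro powr_interval_lower) auto
          have T: "\<delta>g / (2 * z) \<le> 1 / t" using True t0 z0 dg(1) by (auto simp: field_simps)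
          have "c0 * z powr (a - 1) / z = (cf * (z powr (a - 1) * \<kappa>a)) * (cg * \<kappa>g) * (\<delta>g / (2 * z))"
            by (simp add: c0_def)
          also have "\<dots> \<le> (cf * t powr (a - 1)) * (cg * (z / t) powr (b - 1)) * (1 / t)"
            using F2 G2 T df(2) dg(2) \<kappa> z0 dg(1)
            by (intro mult_mono mult_left_mono) (auto intro!: mult_nonneg_nonneg)
          also have "\<dots> \<le> f t * g (z / t) * (1 / t)"
            using F1 G1 t0 df(2) dg(2) gnn fnn by (intro mult_mono mult_right_mono) (auto intro: mult_nonneg_nonneg)
          finally show ?thesis using True by (simp add: k_def C1_def)
        qed (simp add: knn)
        have le: "z / \<delta>g \<le> 2 * z / \<delta>g" using z0 dg(1) by (simp add: divide_right_mono)
        have "(\<integral>t. C1 * indicator {z / \<delta>g..2 * z / \<delta>g} t \<partial>lborel) \<le> h z"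
          unfolding h_def using kint klow le by (intro integral_mono) auto
        moreover have "(\<integral>t. C1 * indicator {z / \<delta>g..2 * z / \<delta>g} t \<partial>lborel)
            = C1 * (2 * z / \<delta>g - z / \<delta>g)"
          using le by simp
        moreover have "C1 * (2 * z / \<delta>g - z / \<delta>g) = (c0 / \<delta>g) * z powr (a - 1)"
          using z0 dg(1) by (simp add: field_simps C1_def)
        ultimately show ?thesis by linarith
      qed
      moreover have "c0 / \<delta>g > 0" using c0 dg by simp
      ultimately show ?thesis unfolding lowb_def m using \<delta> by blast
    next
      case False
      then have m: "min a b = b" by simp
      define \<kappa>b where "\<kappa>b = min ((1 / \<delta>f) powr (b - 1)) ((2 / \<delta>f) powr (b - 1))"
      define \<kappa>f where "\<kappa>f = min ((\<delta>f / 2) powr (a - 1)) (\<delta>f powr (a - 1))"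
      have \<kappa>: "\<kappa>b > 0" "\<kappa>f > 0" using df by (auto simp: \<kappa>b_def \<kappa>f_def)
      define c0 where "c0 = cf * cg * \<kappa>b * \<kappa>f / \<delta>f"
      have c0: "c0 > 0" using df dg \<kappa> by (simp add: c0_def)
      have "(c0 * \<delta>f / 2) * z powr (b - 1) \<le> h z" if z: "z \<in> {0<..\<delta>}" for z
      proof -
        have z0: "z > 0" using z by simp
        define C1 where "C1 = c0 * z powr (b - 1)"
        have klow: "C1 * indicator {\<delta>f / 2..\<delta>f} t \<le> k z t" for t
        proof (cases "t \<in> {\<delta>f / 2..\<delta>f}")
          case True
          have t0: "t > 0" using True df(1) by (auto intro: less_le_trans[of 0 "\<delta>f / 2"])
          have zt: "(1 / \<delta>f) * z \<le> z / t" "z / t \<le> (2 / \<delta>f) * z"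
            using True t0 df(1) z0 by (auto simp: field_simps)
          have zt2: "z / t \<le> \<delta>g"
          proof -
            have "z / t \<le> (2 / \<delta>f) * z" by (rule zt(2))
            also have "\<dots> \<le> (2 / \<delta>f) * \<delta>" using z df(1) by (intro mult_left_mono) auto
            also have "\<dots> = \<delta>g" using df(1) by (simp add: \<delta>_def)
            finally show ?thesis .
          qed
          have F1: "cf * t powr (a - 1) \<le> f t" using df(3)[of t] t0 True by simp
          have F2: "\<kappa>f \<le> t powr (a - 1)"
            unfolding \<kappa>f_def using True df(1) by (intro powr_interval_lower) auto
          have G1: "cg * (z / t) powr (b - 1) \<le> g (z / t)"
            using dg(3)[of "z / t"] zt2 t0 z0 by simp
          have G2: "z powr (b - 1) * \<kappa>b \<le> (z / t) powr (b - 1)"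
            unfolding \<kappa>b_def using zt z0 df(1) by (intro powr_scaled_lower) auto
          have T: "1 / \<delta>f \<le> 1 / t" using True t0 by (auto simp: field_simps)
          have "c0 * z powr (b - 1) = (cf * \<kappa>f) * (cg * (z powr (b - 1) * \<kappa>b)) * (1 / \<delta>f)"
            by (simp add: c0_def)
          also have "\<dots> \<le> (cf * t powr (a - 1)) * (cg * (z / t) powr (b - 1)) * (1 / t)"
            using F2 G2 T df dg \<kappa> z0
            by (intro mult_mono mult_left_mono) (auto intro!: mult_nonneg_nonneg)
          also have "\<dots> \<le> f t * g (z / t) * (1 / t)"
            using F1 G1 t0 df(2) dg(2) gnn fnn by (intro mult_mono mult_right_mono) (auto intro: mult_nonneg_nonneg)
          finally show ?thesis using True by (simp add: k_def C1_def)
        qed (simp add: knn)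
        have "(\<integral>t. C1 * indicator {\<delta>f / 2..\<delta>f} t \<partial>lborel) \<le> h z"
          unfolding h_def using kint klow df(1) by (intro integral_mono) auto
        moreover have "(\<integral>t. C1 * indicator {\<delta>f / 2..\<delta>f} t \<partial>lborel)
            = C1 * (\<delta>f - \<delta>f / 2)"
          using df(1) by simp
        moreover have "C1 * (\<delta>f - \<delta>f / 2) = (c0 * \<delta>f / 2) * z powr (b - 1)"
          by (simp add: field_simps C1_def)
        ultimately show ?thesis by linarith
      qed
      moreover have "c0 * \<delta>f / 2 > 0" using c0 df by simp
      ultimately show ?thesis unfolding lowb_def m using \<delta> by blast
    qed
  qed
  show ?thesis using dist bh ph lh by blast
qed

definition up01 :: "(real \<Rightarrow> real) \<Rightarrow> real \<Rightarrow> bool" where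
  "up01 f m \<longleftrightarrow> (\<forall>w. 0 < w \<and> w < m \<longrightarrow> (\<exists>C. \<forall>x\<in>{0<..1}. f x \<le> C * x powr (w - 1)))"

lemma pupb_up01: "pupb f m \<Longrightarrow> up01 f m"
  unfolding pupb_def up01_def by fastforce

lemma supb_up01:
  assumes "basic_dens f" "supb f m"
  shows "up01 f m"
  unfolding up01_def
proof (intro allI impI)
  fix w assume w: "0 < w \<and> w < m"
  obtain C where C: "\<forall>x>0. f x \<le> C * x powr (m - 1)" using assms(2) by (auto simp: supb_def)
  have C0: "C \<ge> 0" by (rule supb_nonneg_const[OF assms(1) C])
  have "f x \<le> C * x powr (w - 1)" if x: "x \<in> {0<..1}" for x
  proof -
    have "x powr (m - 1) \<le> x powr (w - 1)" using x w by (intro powr_mono') auto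
    then have "C * x powr (m - 1) \<le> C * x powr (w - 1)" using C0 by (intro mult_left_mono) auto
    then show ?thesis using C x by force
  qed
  then show "\<exists>C. \<forall>x\<in>{0<..1}. f x \<le> C * x powr (w - 1)" by blast
qed

lemma shape_of:
  fixes X :: "'a \<Rightarrow> real"
  assumes M: "prob_space M" and X: "distributed M lborel X (\<lambda>x. ennreal (h x))"
    and bh: "basic_dens h" and m: "m > 0" and u: "up01 h m" and l: "lowb h m"
    and p: "cont_density M X p"
  shows "sparsity_shape p = m"
proof -
  have pd: "distributed M lborel X (\<lambda>x. ennreal (p x))" "\<forall>x. 0 \<le> p x" "continuous_on {0<..} p"
    using p by (auto simp: cont_density_def)
  have eq: "p x = h x" if "x > 0" for x
    by (rule cont_density_unique[OF M pd(1) pd(3) X _ _ _ that]) (use pd(2) bh in \<open>auto simp: basic_dens_def\<close>)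
  obtain \<delta> c where dc: "\<delta> > 0" "c > 0" "\<And>x. x \<in> {0<..\<delta>} \<Longrightarrow> c * x powr (m - 1) \<le> h x"
    using l by (auto simp: lowb_def)
  show ?thesis
  proof (rule sparsity_from_bounds[OF m _ _ dc(1,2)])
    show "0 \<le> p x" if "x > 0" for x using pd(2) by simp
    show "\<exists>C. \<forall>x\<in>{0<..1}. p x \<le> C * x powr (w - 1)" if "0 < w" "w < m" for w
      using u that eq unfolding up01_def by (metis greaterThanAtMost_iff)
    show "c * x powr (m - 1) \<le> p x" if "x \<in> {0<..\<delta>}" for x
      using dc(3)[OF that] eq[of x] that by simp
  qed
qed

lemma sum_all:
  fixes M :: "'a measure" and K :: nat and lam c :: "nat \<Rightarrow> real"
    and \<eta> :: "nat \<Rightarrow> 'a \<Rightarrow> real"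
  assumes M: "prob_space M"
    and lam: "\<And>i. i \<in> {1..K} \<Longrightarrow> lam i > 0"
    and cpos: "\<And>i. i \<in> {1..K} \<Longrightarrow> c i > 0"
    and ind: "prob_space.indep_vars M (\<lambda>_. borel) \<eta> {1..K}"
    and dist: "\<And>i. i \<in> {1..K} \<Longrightarrow>
           distributed M lborel (\<eta> i) (\<lambda>x. ennreal (gg_density (lam i) (c i) 1 x))"
  shows "1 \<le> k \<Longrightarrow> k \<le> K \<Longrightarrow> \<exists>h. distributed M lborel (\<lambda>\<omega>. \<Sum>i=1..k. \<eta> i \<omega>) (\<lambda>x. ennreal (h x))
            \<and> basic_dens h \<and> supb h (\<Sum>i=1..k. lam i) \<and> lowb h (\<Sum>i=1..k. lam i)"
proof (induction k)
  case 0 then show ?case by simp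
next
  case (Suc k)
  have kK: "Suc k \<in> {1..K}" using Suc by simp
  note gg = gg_props[OF lam[OF kK] cpos[OF kK]]
  show ?case
  proof (cases "k = 0")
    case True
    then show ?thesis using dist[OF kK] gg by auto
  next
    case False
    then obtain h where h: "distributed M lborel (\<lambda>\<omega>. \<Sum>i=1..k. \<eta> i \<omega>) (\<lambda>x. ennreal (h x))"
      "basic_dens h" "supb h (\<Sum>i=1..k. lam i)" "lowb h (\<Sum>i=1..k. lam i)"
      using Suc by auto
    have indep: "prob_space.indep_var M borel (\<eta> (Suc k)) borel (\<lambda>\<omega>. \<Sum>i\<in>{1..k}. \<eta> i \<omega>)"
    proof (rule prob_space.indep_vars_sum[OF M])
      show "prob_space.indep_vars M (\<lambda>_. borel) \<eta> (insert (Suc k) {1..k})"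
        using prob_space.indep_vars_subset[OF M ind] Suc by auto
    qed auto
    have pos: "(\<Sum>i=1..k. lam i) > 0"
      using False Suc lam by (intro sum_pos) auto
    from sum_step[OF M indep dist[OF kK] h(1) gg(1) h(2) lam[OF kK] pos gg(2) h(3) gg(4) h(4)]
    obtain h' where h': "distributed M lborel (\<lambda>\<omega>. \<eta> (Suc k) \<omega> + (\<Sum>i=1..k. \<eta> i \<omega>)) (\<lambda>x. ennreal (h' x))"
      "basic_dens h'" "supb h' (lam (Suc k) + (\<Sum>i=1..k. lam i))" "lowb h' (lam (Suc k) + (\<Sum>i=1..k. lam i))"
      by blast
    have e1: "(\<lambda>\<omega>. \<eta> (Suc k) \<omega> + (\<Sum>i=1..k. \<eta> i \<omega>)) = (\<lambda>\<omega>. \<Sum>i=1..Suc k. \<eta> i \<omega>)"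
      by (simp add: fun_eq_iff add.commute)
    have e2: "lam (Suc k) + (\<Sum>i=1..k. lam i) = (\<Sum>i=1..Suc k. lam i)" by (simp add: add.commute)
    show ?thesis using h' unfolding e1 e2 by blast
  qed
qed

lemma prod_all:
  fixes M :: "'a measure" and K :: nat and lam c :: "nat \<Rightarrow> real"
    and \<eta> :: "nat \<Rightarrow> 'a \<Rightarrow> real"
  assumes M: "prob_space M"
    and lam: "\<And>i. i \<in> {1..K} \<Longrightarrow> lam i > 0"
    and cpos: "\<And>i. i \<in> {1..K} \<Longrightarrow> c i > 0"
    and ind: "prob_space.indep_vars M (\<lambda>_. borel) \<eta> {1..K}"
    and dist: "\<And>i. i \<in> {1..K} \<Longrightarrow>
           distributed M lborel (\<eta> i) (\<lambda>x. ennreal (gg_density (lam i) (c i) 1 x))"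
  shows "1 \<le> k \<Longrightarrow> k \<le> K \<Longrightarrow> \<exists>h. distributed M lborel (\<lambda>\<omega>. \<Prod>i=1..k. \<eta> i \<omega>) (\<lambda>x. ennreal (h x))
            \<and> basic_dens h \<and> pupb h (Min (lam ` {1..k})) \<and> lowb h (Min (lam ` {1..k}))"
proof (induction k)
  case 0 then show ?case by simp
next
  case (Suc k)
  have kK: "Suc k \<in> {1..K}" using Suc by simp
  note gg = gg_props[OF lam[OF kK] cpos[OF kK]]
  show ?case
  proof (cases "k = 0")
    case True
    then show ?thesis using dist[OF kK] gg by auto
  next
    case False
    then obtain h where h: "distributed M lborel (\<lambda>\<omega>. \<Prod>i=1..k. \<eta> i \<omega>) (\<lambda>x. ennreal (h x))"
      "basic_dens h" "pupb h (Min (lam ` {1..k}))" "lowb h (Min (lam ` {1..k}))"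
      using Suc by auto
    have indep: "prob_space.indep_var M borel (\<eta> (Suc k)) borel (\<lambda>\<omega>. \<Prod>i\<in>{1..k}. \<eta> i \<omega>)"
    proof (rule prob_space.indep_vars_prod[OF M])
      show "prob_space.indep_vars M (\<lambda>_. borel) \<eta> (insert (Suc k) {1..k})"
        using prob_space.indep_vars_subset[OF M ind] Suc by auto
    qed auto
    have pos: "Min (lam ` {1..k}) > 0"
      using False Suc lam by (subst Min_gr_iff) auto
    from prod_step[OF M indep dist[OF kK] h(1) gg(1) h(2) lam[OF kK] pos gg(3) h(3) gg(4) h(4)]
    obtain h' where h': "distributed M lborel (\<lambda>\<omega>. \<eta> (Suc k) \<omega> * (\<Prod>i=1..k. \<eta> i \<omega>)) (\<lambda>x. ennreal (h' x))"
      "basic_dens h'" "pupb h' (min (lam (Suc k)) (Min (lam ` {1..k})))" "lowb h' (min (lam (Suc k)) (Min (lam ` {1..k})))"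
      by blast
    have e1: "(\<lambda>\<omega>. \<eta> (Suc k) \<omega> * (\<Prod>i=1..k. \<eta> i \<omega>)) = (\<lambda>\<omega>. \<Prod>i=1..Suc k. \<eta> i \<omega>)"
      by (simp add: fun_eq_iff mult.commute)
    have "{1..Suc k} = insert (Suc k) {1..k}" by auto
    then have e2: "min (lam (Suc k)) (Min (lam ` {1..k})) = Min (lam ` {1..Suc k})"
      using False by (simp add: Min_insert)
    show ?thesis using h' unfolding e1 e2 by blast
  qed
qed

theorem theorem2:
  fixes M :: "'a measure" and K :: nat and lam c :: "nat \<Rightarrow> real"
    and \<eta> :: "nat \<Rightarrow> 'a \<Rightarrow> real"
  assumes "prob_space M"
    and "K \<ge> 1"
    and "\<And>i. i \<in> {1..K} \<Longrightarrow> lam i > 0"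
    and "\<And>i. i \<in> {1..K} \<Longrightarrow> c i > 0"
    and "prob_space.indep_vars M (\<lambda>_. borel) \<eta> {1..K}"
    and "\<And>i. i \<in> {1..K} \<Longrightarrow>
           distributed M lborel (\<eta> i) (\<lambda>x. ennreal (gg_density (lam i) (c i) 1 x))"
  shows "((\<exists>p. cont_density M (\<lambda>\<omega>. \<Prod>i=1..K. \<eta> i \<omega>) p)
          \<and> (\<forall>p. cont_density M (\<lambda>\<omega>. \<Prod>i=1..K. \<eta> i \<omega>) p
                 \<longrightarrow> sparsity_shape p = Min (lam ` {1..K})))
       \<and> ((\<exists>p. cont_density M (\<lambda>\<omega>. \<Sum>i=1..K. \<eta> i \<omega>) p)
          \<and> (\<forall>p. cont_density M (\<lambda>\<omega>. \<Sum>i=1..K. \<eta> i \<omega>) p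
                 \<longrightarrow> sparsity_shape p = (\<Sum>i=1..K. lam i)))"
proof -
  note A = assms
  obtain hs where hs: "distributed M lborel (\<lambda>\<omega>. \<Sum>i=1..K. \<eta> i \<omega>) (\<lambda>x. ennreal (hs x))"
    "basic_dens hs" "supb hs (\<Sum>i=1..K. lam i)" "lowb hs (\<Sum>i=1..K. lam i)"
    using sum_all[OF A(1,3,4,5,6) A(2) order.refl] by blast
  obtain hp where hp: "distributed M lborel (\<lambda>\<omega>. \<Prod>i=1..K. \<eta> i \<omega>) (\<lambda>x. ennreal (hp x))"
    "basic_dens hp" "pupb hp (Min (lam ` {1..K}))" "lowb hp (Min (lam ` {1..K}))"
    using prod_all[OF A(1,3,4,5,6) A(2) order.refl] by blast
  have spos: "(\<Sum>i=1..K. lam i) > 0" using A(2,3) by (intro sum_pos) auto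
  have mpos: "Min (lam ` {1..K}) > 0" using A(2,3) by (subst Min_gr_iff) auto
  have "cont_density M (\<lambda>\<omega>. \<Sum>i=1..K. \<eta> i \<omega>) hs"
    using hs by (auto simp: cont_density_def basic_dens_def)
  moreover have "cont_density M (\<lambda>\<omega>. \<Prod>i=1..K. \<eta> i \<omega>) hp"
    using hp by (auto simp: cont_density_def basic_dens_def)
  moreover have "sparsity_shape p = (\<Sum>i=1..K. lam i)" if "cont_density M (\<lambda>\<omega>. \<Sum>i=1..K. \<eta> i \<omega>) p" for p
    by (rule shape_of[OF A(1) hs(1) hs(2) spos supb_up01[OF hs(2,3)] hs(4) that])
  moreover have "sparsity_shape p = Min (lam ` {1..K})" if "cont_density M (\<lambda>\<omega>. \<Prod>i=1..K. \<eta> i \<omega>) p" for p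
    by (rule shape_of[OF A(1) hp(1) hp(2) mpos pupb_up01[OF hp(3)] hp(4) that])
  ultimately show ?thesis by blast
qed

end
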